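(* Let $\mu$ be a Borel probability measure on $\mathbb{R}^d$ and $u\in\mathbb{R}^d$. Let $\{\theta_k\}_{k\in\mathbb{N}}\subset(0,\pi/2)$ and $\{v_k\}_{k\in\mathbb{N}}\subset\mathcal{S}^{d-1}$ satisfy $\theta_k\to0^+$ and $v_k\to v$ as $k\to\infty$. Then $$\limsup_{k\to\infty}\mu(\mathcal{A}_{u,v_k,\theta_k})\leq\mu(\{y:\langle y-u,v\rangle\geq0\}).$$
   Context: For $u\in\mathbb{R}^d$, $e\in\mathcal{S}^{d-1}$, $\theta\in(0,\pi/2)$: $\mathcal{A}_{u,e,\theta}=\{y\in\mathbb{R}^d:\langle u-y,e\rangle\leq\|u-y\|\,|\sin\theta|/(1-\sin^2\theta)^{1/2}\}$. *)

theory Defs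
  imports "HOL-Probability.Probability"
begin

definition coneA :: "'a::euclidean_space \<Rightarrow> 'a \<Rightarrow> real \<Rightarrow> 'a set" where
  "coneA u e \<theta> = {y. inner (u - y) e \<le> norm (u - y) * \<bar>sin \<theta>\<bar> / sqrt (1 - (sin \<theta>)\<^sup>2)}"

end

theory Submission
  imports Defs
begin

theorem mainTheorem6:
  fixes M :: "'a::euclidean_space measure" and u v :: 'a
    and \<theta> :: "nat \<Rightarrow> real" and vs :: "nat \<Rightarrow> 'a"
  assumes "prob_space M" and "sets M = sets borel"
    and "\<And>k. 0 < \<theta> k \<and> \<theta> k < pi / 2"
    and "\<And>k. vs k \<in> sphere 0 1"
    and "\<theta> \<longlonglongrightarrow> 0" and "vs \<longlonglongrightarrow> v"
  shows "limsup (\<lambda>k. ereal (measure M (coneA u (vs k) (\<theta> k))))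
           \<le> ereal (measure M {y. inner (y - u) v \<ge> 0})"
proof -
  interpret prob_space M by fact
  define t where "t k = \<bar>sin (\<theta> k)\<bar> / sqrt (1 - (sin (\<theta> k))\<^sup>2)" for k
  define A where "A k = coneA u (vs k) (\<theta> k)" for k
  define B where "B n = (\<Union>k\<in>{n..}. A k)" for n
  define T where "T = {y. inner (y - u) v \<ge> 0}"
  have Aeq: "A k = {y. inner (u - y) (vs k) \<le> norm (u - y) * t k}" for k
    unfolding A_def coneA_def t_def by simp
  have Ameas: "A k \<in> sets M" for k
  proof -
    have "closed (A k)" unfolding Aeq
      by (intro closed_Collect_le continuous_intros)
    then show ?thesis using assms(2) by simp
  qed
  have Bmeas: "B n \<in> sets M" for n
    unfolding B_def using Ameas by blast
  have Tmeas: "T \<in> sets M"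
  proof -
    have "closed T" unfolding T_def
      by (intro closed_Collect_le continuous_intros)
    then show ?thesis using assms(2) by simp
  qed
  have dec: "decseq B" unfolding B_def decseq_def by (auto intro: order_trans)
  have lim: "(\<lambda>n. measure M (B n)) \<longlonglongrightarrow> measure M (\<Inter>n. B n)"
    using finite_Lim_measure_decseq[OF _ dec] Bmeas by blast
  have t0: "t \<longlonglongrightarrow> 0"
  proof -
    have "(\<lambda>k. \<bar>sin (\<theta> k)\<bar> / sqrt (1 - (sin (\<theta> k))\<^sup>2)) \<longlonglongrightarrow> \<bar>sin 0\<bar> / sqrt (1 - (sin 0)\<^sup>2)"
      by (intro tendsto_intros assms(5)) simp
    then show ?thesis unfolding t_def by simp
  qed
  have sub: "(\<Inter>n. B n) \<subseteq> T"
  proof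
    fix y assume y: "y \<in> (\<Inter>n. B n)"
    show "y \<in> T"
    proof (rule ccontr)
      assume "y \<notin> T"
      then have c: "inner (u - y) v > 0" unfolding T_def
        by (simp add: inner_diff_left)
      have "(\<lambda>k. inner (u - y) (vs k) - norm (u - y) * t k) \<longlonglongrightarrow> inner (u - y) v - norm (u - y) * 0"
        by (intro tendsto_intros assms(6) t0)
      then have "eventually (\<lambda>k. inner (u - y) (vs k) - norm (u - y) * t k > 0) sequentially"
        using c by (intro order_tendstoD) auto
      then obtain N where N: "\<And>k. k \<ge> N \<Longrightarrow> inner (u - y) (vs k) - norm (u - y) * t k > 0"
        by (auto simp: eventually_sequentially)
      have "y \<in> B N" using y by auto
      then obtain k where "k \<ge> N" "y \<in> A k" unfolding B_def by auto
      then show False using N[of k] unfolding Aeq by auto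
    qed
  qed
  have "limsup (\<lambda>k. ereal (measure M (A k))) \<le> limsup (\<lambda>k. ereal (measure M (B k)))"
  proof (rule Limsup_mono)
    show "\<forall>\<^sub>F k in sequentially. ereal (measure M (A k)) \<le> ereal (measure M (B k))"
      using Ameas Bmeas by (intro always_eventually allI) (auto simp: B_def intro!: finite_measure_mono)
  qed
  also have "\<dots> = ereal (measure M (\<Inter>n. B n))"
    by (intro lim_imp_Limsup) (auto simp: lim)
  also have "\<dots> \<le> ereal (measure M T)"
    using sub Tmeas by (auto intro!: finite_measure_mono)
  finally show ?thesis unfolding A_def T_def .
qed

end
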